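(* For all integers $k,l\ge1$, $La^*([k]\times[l],\vee_2)=k+l-1$.
   Context: $[k]\times[l]$ is ordered coordinatewise. $\vee_2$ is the poset on three elements $a,b_1,b_2$ whose only relations are $a<b_1$, $a<b_2$. For posets $P,R$, $P$ is a strong subposet of $R$ if there is an injection $i:P\to R$ with $p\le_P p'\iff i(p)\le_R i(p')$. A subset $F\subseteq Q$ is strong $P$-free if $P$ is not a strong subposet of $F$ with the induced order; $La^*(Q,P)$ is the maximum size of a strong $P$-free subset of $Q$. *)

theory Defs
  imports Main
begin

definition strong_subposet ::
  "'a set \<Rightarrow> ('a \<Rightarrow> 'a \<Rightarrow> bool) \<Rightarrow> 'b set \<Rightarrow> ('b \<Rightarrow> 'b \<Rightarrow> bool) \<Rightarrow> bool" where
  "strong_subposet CP leP CR leR \<longleftrightarrow>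
     (\<exists>i. i ` CP \<subseteq> CR \<and> inj_on i CP \<and>
          (\<forall>p\<in>CP. \<forall>p'\<in>CP. leP p p' \<longleftrightarrow> leR (i p) (i p')))"

definition strong_free ::
  "'b set \<Rightarrow> ('b \<Rightarrow> 'b \<Rightarrow> bool) \<Rightarrow> 'a set \<Rightarrow> ('a \<Rightarrow> 'a \<Rightarrow> bool) \<Rightarrow> bool" where
  "strong_free F leQ CP leP \<longleftrightarrow> \<not> strong_subposet CP leP F leQ"

definition La_star ::
  "'b set \<Rightarrow> ('b \<Rightarrow> 'b \<Rightarrow> bool) \<Rightarrow> 'a set \<Rightarrow> ('a \<Rightarrow> 'a \<Rightarrow> bool) \<Rightarrow> nat" where
  "La_star Q leQ CP leP = Max {card F | F. F \<subseteq> Q \<and> strong_free F leQ CP leP}"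

definition grid :: "nat \<Rightarrow> nat \<Rightarrow> (nat \<times> nat) set" where
  "grid k l = {1..k} \<times> {1..l}"

definition grid_le :: "nat \<times> nat \<Rightarrow> nat \<times> nat \<Rightarrow> bool" where
  "grid_le x y \<longleftrightarrow> fst x \<le> fst y \<and> snd x \<le> snd y"

datatype vee2 = Va | Vb1 | Vb2

definition vee2_le :: "vee2 \<Rightarrow> vee2 \<Rightarrow> bool" where
  "vee2_le x y \<longleftrightarrow> x = y \<or> x = Va"

end

theory Submission
  imports Defs
begin

lemma violation:
  assumes "x \<in> F" "y \<in> F" "z \<in> F" "grid_le x y" "grid_le x z" "x \<noteq> y" "x \<noteq> z"
    "\<not> grid_le y z" "\<not> grid_le z y"
  shows "\<not> strong_free F grid_le (UNIV :: vee2 set) vee2_le"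
proof -
  define i where "i = (\<lambda>v. case v of Va \<Rightarrow> x | Vb1 \<Rightarrow> y | Vb2 \<Rightarrow> z)"
  have nyx: "\<not> grid_le y x" using assms(4,6) by (auto simp: grid_le_def prod_eq_iff)
  have nzx: "\<not> grid_le z x" using assms(5,7) by (auto simp: grid_le_def prod_eq_iff)
  have yz: "y \<noteq> z" using assms(8) by (auto simp: grid_le_def)
  have refl: "\<And>u. grid_le u u" by (simp add: grid_le_def)
  have "i ` UNIV \<subseteq> F" using assms(1-3) by (auto simp: i_def split: vee2.splits)
  moreover have "inj_on i UNIV"
    unfolding inj_on_def using assms(6,7) yz
    by (auto simp: i_def split: vee2.splits)
  moreover have "\<forall>p\<in>UNIV. \<forall>p'\<in>UNIV. vee2_le p p' \<longleftrightarrow> grid_le (i p) (i p')"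
  proof (intro ballI)
    fix p p' :: vee2
    show "vee2_le p p' \<longleftrightarrow> grid_le (i p) (i p')"
      using assms(4,5,8,9) nyx nzx refl
      by (cases p; cases p'; simp add: i_def vee2_le_def)
  qed
  ultimately show ?thesis unfolding strong_free_def strong_subposet_def by blast
qed

lemma upper:
  assumes "F \<subseteq> grid k l" "strong_free F grid_le (UNIV :: vee2 set) vee2_le" "l \<ge> 1"
  shows "card F \<le> k + l - 1"
proof -
  define L where "L = (\<lambda>x::nat\<times>nat. if (\<exists>y\<in>F. fst y = fst x \<and> snd y > snd x)
      then Inr (snd x) else Inl (fst x) :: nat + nat)"
  have img: "L ` F \<subseteq> {1..k} <+> {1..l-1}"
  proof
    fix u assume "u \<in> L ` F"
    then obtain x where x: "x \<in> F" "u = L x" by auto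
    show "u \<in> {1..k} <+> {1..l-1}"
    proof (cases "\<exists>y\<in>F. fst y = fst x \<and> snd y > snd x")
      case True
      then obtain y where "y \<in> F" "snd y > snd x" by auto
      then have "snd y \<le> l" using assms(1) by (auto simp: grid_def)
      then show ?thesis using True x \<open>snd y > snd x\<close> assms(1) by (auto simp: L_def grid_def)
    next
      case False
      then show ?thesis using x assms(1) by (auto simp: L_def grid_def)
    qed
  qed
  have inj: "inj_on L F"
  proof (rule inj_onI)
    fix x x' assume xF: "x \<in> F" and x'F: "x' \<in> F" and eq: "L x = L x'"
    show "x = x'"
    proof (cases "\<exists>y\<in>F. fst y = fst x \<and> snd y > snd x")
      case True
      then obtain y where y: "y \<in> F" "fst y = fst x" "snd y > snd x" by auto
      have T': "\<exists>y\<in>F. fst y = fst x' \<and> snd y > snd x'"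
        using eq True by (auto simp: L_def split: if_splits)
      then obtain y' where y': "y' \<in> F" "fst y' = fst x'" "snd y' > snd x'" by auto
      have s: "snd x = snd x'" using eq True T' by (auto simp: L_def)
      show ?thesis
      proof (rule ccontr)
        assume ne: "x \<noteq> x'"
        then have "fst x \<noteq> fst x'" using s by (auto simp: prod_eq_iff)
        then consider "fst x < fst x'" | "fst x' < fst x" by linarith
        then show False
        proof cases
          case 1
          have "\<not> strong_free F grid_le (UNIV :: vee2 set) vee2_le"
            by (rule violation[of x F y x']) (use xF x'F y s 1 ne in \<open>auto simp: grid_le_def\<close>)
          then show False using assms(2) by simp
        next
          case 2
          have "\<not> strong_free F grid_le (UNIV :: vee2 set) vee2_le"
            by (rule violation[of x' F y' x]) (use xF x'F y' s 2 ne in \<open>auto simp: grid_le_def\<close>)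
          then show False using assms(2) by simp
        qed
      qed
    next
      case False
      have F': "\<not> (\<exists>y\<in>F. fst y = fst x' \<and> snd y > snd x')"
        using eq False by (auto simp: L_def split: if_splits)
      have f: "fst x = fst x'" using eq False F' by (auto simp: L_def)
      have "\<not> snd x < snd x'" using False x'F f by auto
      moreover have "\<not> snd x' < snd x" using F' xF f by auto
      ultimately show ?thesis using f by (auto simp: prod_eq_iff)
    qed
  qed
  have "card F \<le> card ({1..k} <+> {1..l-1::nat})"
    by (rule card_inj_on_le[OF inj img]) simp
  also have "\<dots> = k + (l - 1)" by (simp add: card_Plus)
  finally show ?thesis using assms(3) by simp
qed

theorem theorem1p5:
  fixes k l :: nat
  assumes "k \<ge> 1" and "l \<ge> 1"
  shows "La_star (grid k l) grid_le (UNIV :: vee2 set) vee2_le = k + l - 1"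
proof -
  define C where "C = (\<lambda>j. (1::nat, j)) ` {1..l} \<union> (\<lambda>i. (i, l)) ` {2..k}"
  have Csub: "C \<subseteq> grid k l" using assms by (auto simp: C_def grid_def)
  have comp: "\<And>u v. u \<in> C \<Longrightarrow> v \<in> C \<Longrightarrow> grid_le u v \<or> grid_le v u"
    by (auto simp: C_def grid_le_def)
  have Cfree: "strong_free C grid_le (UNIV :: vee2 set) vee2_le"
    unfolding strong_free_def strong_subposet_def
  proof
    assume "\<exists>i. i ` UNIV \<subseteq> C \<and> inj_on i UNIV \<and>
        (\<forall>p\<in>UNIV. \<forall>p'\<in>UNIV. vee2_le p p' = grid_le (i p) (i p'))"
    then obtain i where i: "i ` UNIV \<subseteq> C"
      "\<forall>p\<in>UNIV. \<forall>p'\<in>UNIV. vee2_le p p' = grid_le (i p) (i p')" by blast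
    have "grid_le (i Vb1) (i Vb2) \<or> grid_le (i Vb2) (i Vb1)"
      using comp i(1) by blast
    then show False using i(2) by (auto simp: vee2_le_def)
  qed
  have cardC: "card C = k + l - 1"
  proof -
    have d: "(\<lambda>j. (1::nat, j)) ` {1..l} \<inter> (\<lambda>i. (i, l)) ` {2..k} = {}" by auto
    have "card C = card ((\<lambda>j. (1::nat, j)) ` {1..l}) + card ((\<lambda>i. (i, l)) ` {2..k})"
      unfolding C_def by (rule card_Un_disjoint) (use d in auto)
    also have "\<dots> = l + (k - 1)"
      by (subst card_image, simp add: inj_on_def)+ simp
    finally show ?thesis using assms by simp
  qed
  have fin: "finite (grid k l)" by (simp add: grid_def)
  show ?thesis
    unfolding La_star_def
  proof (rule Max_eqI)
    show "finite {card F |F. F \<subseteq> grid k l \<and> strong_free F grid_le UNIV vee2_le}"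
      by (rule finite_subset[of _ "card ` Pow (grid k l)"]) (use fin in auto)
  next
    fix y assume "y \<in> {card F |F. F \<subseteq> grid k l \<and> strong_free F grid_le UNIV vee2_le}"
    then obtain F where "y = card F" "F \<subseteq> grid k l" "strong_free F grid_le UNIV vee2_le" by blast
    then show "y \<le> k + l - 1" using upper[of F k l] assms by simp
  next
    show "k + l - 1 \<in> {card F |F. F \<subseteq> grid k l \<and> strong_free F grid_le UNIV vee2_le}"
      using Csub Cfree cardC by (intro CollectI exI[of _ C]) simp
  qed
qed

end
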